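(* Let $E_{\mathrm{out}}$ be a lazy expression, $\mathcal L$ a finite family of nonempty polyhedra in $\mathbb{R}^n$, and assign to each $C\in\mathcal L$ numbers $\ell_C\le\inf_C[\![E_{\mathrm{out}}]\!]$ and $u_C\ge\sup_C[\![E_{\mathrm{out}}]\!]$; define $\underline A(x)=\sup\{\ell_C: C\in\mathcal L,\,x\in C\}$ and $\overline A(x)=\inf\{u_C: C\in\mathcal L,\,x\in C\}$ ($\sup\emptyset=-\infty$, $\inf\emptyset=+\infty$). (i) Suppose all $\ell_C=\mathrm{LB}(E_{\mathrm{out}},C)$, $u_C=\mathrm{UB}(E_{\mathrm{out}},C)$, and let $\mathcal L'$ be obtained by replacing some $C\in\mathcal L$ by those of $C\cap\{a^\top x\le d\}$ and $C\cap\{a^\top x\ge d\}$ that are nonempty (for some $a\in\mathbb{R}^n$, $d\in\mathbb{R}$), with the children's numbers again given by $\mathrm{LB}$ and $\mathrm{UB}$. (ii) Alternatively, let the new data be obtained by replacing some $\ell_C$ by a larger value still $\le\inf_C[\![E_{\mathrm{out}}]\!]$, or some $u_C$ by a smaller value still $\ge\sup_C[\![E_{\mathrm{out}}]\!]$. In either case the new envelopes $\underline A',\overline A'$ satisfy $\underline A'(x)\ge\underline A(x)$ and $\overline A'(x)\le\overline A(x)$ for all $x\in\mathbb{R}^n$, and $\underline A'\le[\![E_{\mathrm{out}}]\!]\le\overline A'$ still holds.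
   Context: Lazy (scalar) expressions are generated by $E::=\mathtt{Affine}(w,b)\mid\mathtt{Sum}(\{E_i\})\mid\mathtt{Max}(\{E_i\})\mid\mathtt{Scale}(c,E)\mid\mathtt{Bias}(b,E)$ with denotations $[\![\mathtt{Affine}(w,b)]\!](x)=w^\top x+b$, $[\![\mathtt{Sum}]\!]=$ sum, $[\![\mathtt{Max}]\!]=$ pointwise max, $[\![\mathtt{Scale}(c,E)]\!]=c[\![E]\!]$, $[\![\mathtt{Bias}(b,E)]\!]=[\![E]\!]+b$. A polyhedron is a finite intersection of closed halfspaces. Bounds on a nonempty polyhedron $C$ (values in $\mathbb{R}\cup\{\pm\infty\}$, $0\cdot(\pm\infty)=0$): $\mathrm{LB}(\mathtt{Affine}(w,b),C)=\inf_C(w^\top x+b)$, $\mathrm{UB}(\mathtt{Affine}(w,b),C)=\sup_C(w^\top x+b)$; $\mathtt{Sum}$: sums of children's bounds; $\mathtt{Scale}(c,E)$: $(c\,\mathrm{LB},c\,\mathrm{UB})$ if $c\ge0$, $(c\,\mathrm{UB},c\,\mathrm{LB})$ if $c<0$; $\mathtt{Bias}(b,E)$: bounds shifted by $b$; $\mathtt{Max}$: maxima of children's $\mathrm{LB}$ and of their $\mathrm{UB}$. *)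

theory Defs
  imports "HOL-Analysis.Analysis"
begin

text \<open>Lazy scalar expressions over R^n (n given by the finite index type 'n).
  The finite families of children are represented by lists.\<close>

datatype ('n::finite) lexpr =
    Affine "real^'n" real
  | SumE "'n lexpr list"
  | MaxE "'n lexpr list"
  | Scale real "'n lexpr"
  | Bias real "'n lexpr"

fun wf_lexpr :: "('n::finite) lexpr \<Rightarrow> bool" where
  "wf_lexpr (Affine w b) = True"
| "wf_lexpr (SumE Es) = (\<forall>E\<in>set Es. wf_lexpr E)"
| "wf_lexpr (MaxE Es) = (Es \<noteq> [] \<and> (\<forall>E\<in>set Es. wf_lexpr E))"
| "wf_lexpr (Scale c E) = wf_lexpr E"
| "wf_lexpr (Bias b E) = wf_lexpr E"

fun den :: "('n::finite) lexpr \<Rightarrow> real^'n \<Rightarrow> real" where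
  "den (Affine w b) x = w \<bullet> x + b"
| "den (SumE Es) x = sum_list (map (\<lambda>E. den E x) Es)"
| "den (MaxE Es) x = Max (set (map (\<lambda>E. den E x) Es))"
| "den (Scale c E) x = c * den E x"
| "den (Bias b E) x = den E x + b"

text \<open>Bounds (LB, UB) on a set C, in the extended reals (0 * (+-inf) = 0 in ereal).\<close>
fun bnds :: "('n::finite) lexpr \<Rightarrow> (real^'n) set \<Rightarrow> ereal \<times> ereal" where
  "bnds (Affine w b) C =
     ((INF x\<in>C. ereal (w \<bullet> x + b)), (SUP x\<in>C. ereal (w \<bullet> x + b)))"
| "bnds (SumE Es) C =
     (sum_list (map (\<lambda>E. fst (bnds E C)) Es), sum_list (map (\<lambda>E. snd (bnds E C)) Es))"
| "bnds (MaxE Es) C =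
     (Max (set (map (\<lambda>E. fst (bnds E C)) Es)), Max (set (map (\<lambda>E. snd (bnds E C)) Es)))"
| "bnds (Scale c E) C =
     (if 0 \<le> c then (ereal c * fst (bnds E C), ereal c * snd (bnds E C))
      else (ereal c * snd (bnds E C), ereal c * fst (bnds E C)))"
| "bnds (Bias b E) C = (fst (bnds E C) + ereal b, snd (bnds E C) + ereal b)"

definition LB :: "('n::finite) lexpr \<Rightarrow> (real^'n) set \<Rightarrow> ereal" where
  "LB E C = fst (bnds E C)"

definition UB :: "('n::finite) lexpr \<Rightarrow> (real^'n) set \<Rightarrow> ereal" where
  "UB E C = snd (bnds E C)"

text \<open>Envelopes (Sup {} = -inf, Inf {} = +inf in ereal).\<close>
definition lower_env :: "(real^'n) set set \<Rightarrow> ((real^'n) set \<Rightarrow> ereal) \<Rightarrow> real^'n \<Rightarrow> ereal" where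
  "lower_env L lo x = (SUP C\<in>{C\<in>L. x \<in> C}. lo C)"

definition upper_env :: "(real^'n) set set \<Rightarrow> ((real^'n) set \<Rightarrow> ereal) \<Rightarrow> real^'n \<Rightarrow> ereal" where
  "upper_env L up x = (INF C\<in>{C\<in>L. x \<in> C}. up C)"

definition split_step ::
  "('n::finite) lexpr \<Rightarrow> (real^'n) set set \<Rightarrow> ((real^'n) set \<Rightarrow> ereal) \<Rightarrow> ((real^'n) set \<Rightarrow> ereal)
   \<Rightarrow> (real^'n) set set \<Rightarrow> ((real^'n) set \<Rightarrow> ereal) \<Rightarrow> ((real^'n) set \<Rightarrow> ereal) \<Rightarrow> bool" where
  "split_step E L lo up L' lo' up' \<longleftrightarrow>
     (\<forall>C\<in>L. lo C = LB E C \<and> up C = UB E C) \<and>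
     (\<exists>C\<in>L. \<exists>a d. L' = (L - {C}) \<union>
         {D \<in> {C \<inter> {x. a \<bullet> x \<le> d}, C \<inter> {x. a \<bullet> x \<ge> d}}. D \<noteq> {}}) \<and>
     (\<forall>D\<in>L'. lo' D = LB E D \<and> up' D = UB E D)"

definition tighten_step ::
  "('n::finite) lexpr \<Rightarrow> (real^'n) set set \<Rightarrow> ((real^'n) set \<Rightarrow> ereal) \<Rightarrow> ((real^'n) set \<Rightarrow> ereal)
   \<Rightarrow> (real^'n) set set \<Rightarrow> ((real^'n) set \<Rightarrow> ereal) \<Rightarrow> ((real^'n) set \<Rightarrow> ereal) \<Rightarrow> bool" where
  "tighten_step E L lo up L' lo' up' \<longleftrightarrow> L' = L \<and>
     (\<exists>C\<in>L. \<exists>v.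
        (lo C < v \<and> v \<le> (INF x\<in>C. ereal (den E x)) \<and> lo' = lo(C := v) \<and> up' = up) \<or>
        (v < up C \<and> (SUP x\<in>C. ereal (den E x)) \<le> v \<and> up' = up(C := v) \<and> lo' = lo))"

end

theory Submission
  imports Defs
begin

lemma ereal_neg_mult_anti:
  fixes a b :: ereal
  assumes "c < 0" "b \<le> a"
  shows "ereal c * a \<le> ereal c * b"
  using assms by (cases a; cases b) (auto simp: mult_left_mono_neg)

lemma Max_list_mono:
  fixes f g :: "'a \<Rightarrow> 'b::linorder"
  assumes "xs \<noteq> []" "\<And>y. y \<in> set xs \<Longrightarrow> f y \<le> g y"
  shows "Max (set (map f xs)) \<le> Max (set (map g xs))"
proof -
  have "\<forall>a\<in>set (map f xs). a \<le> Max (set (map g xs))"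
  proof
    fix a assume "a \<in> set (map f xs)"
    then obtain y where y: "y \<in> set xs" "a = f y" by auto
    have "g y \<le> Max (set (map g xs))" using y by (intro Max_ge) auto
    thus "a \<le> Max (set (map g xs))" using y assms(2)[of y] by (metis order.trans)
  qed
  thus ?thesis using assms(1) by (subst Max_le_iff) auto
qed

lemma bnds_sound:
  "wf_lexpr E \<Longrightarrow> x \<in> C \<Longrightarrow> fst (bnds E C) \<le> ereal (den E x) \<and> ereal (den E x) \<le> snd (bnds E C)"
proof (induction E)
  case (Affine w b)
  then show ?case by (auto intro: INF_lower SUP_upper)
next
  case (SumE Es)
  have "sum_list (map (\<lambda>E. fst (bnds E C)) Es) \<le> sum_list (map (\<lambda>E. ereal (den E x)) Es)"
    using SumE by (intro sum_list_mono) auto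
  moreover have "sum_list (map (\<lambda>E. ereal (den E x)) Es) \<le> sum_list (map (\<lambda>E. snd (bnds E C)) Es)"
    using SumE by (intro sum_list_mono) auto
  moreover have "sum_list (map (\<lambda>E. ereal (den E x)) Es) = ereal (sum_list (map (\<lambda>E. den E x) Es))"
    by (induction Es) auto
  ultimately show ?case by simp
next
  case (MaxE Es)
  have ne: "Es \<noteq> []" using MaxE by simp
  have "Max (set (map (\<lambda>E. fst (bnds E C)) Es)) \<le> Max (set (map (\<lambda>E. ereal (den E x)) Es))"
    using MaxE ne by (intro Max_list_mono) auto
  moreover have "Max (set (map (\<lambda>E. ereal (den E x)) Es)) \<le> Max (set (map (\<lambda>E. snd (bnds E C)) Es))"
    using MaxE ne by (intro Max_list_mono) auto
  moreover have "Max (set (map (\<lambda>E. ereal (den E x)) Es)) = ereal (Max (set (map (\<lambda>E. den E x) Es)))"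
  proof -
    have "set (map (\<lambda>E. ereal (den E x)) Es) = ereal ` set (map (\<lambda>E. den E x) Es)" by auto
    moreover have "Max (ereal ` set (map (\<lambda>E. den E x) Es)) = ereal (Max (set (map (\<lambda>E. den E x) Es)))"
      using ne by (intro mono_Max_commute[symmetric]) (auto simp: mono_def)
    ultimately show ?thesis by simp
  qed
  ultimately show ?case by simp
next
  case (Scale c E)
  then have ih: "fst (bnds E C) \<le> ereal (den E x)" "ereal (den E x) \<le> snd (bnds E C)" by auto
  show ?case
  proof (cases "0 \<le> c")
    case True
    have "ereal c * fst (bnds E C) \<le> ereal c * ereal (den E x)"
      using True ih by (intro ereal_mult_left_mono) auto
    moreover have "ereal c * ereal (den E x) \<le> ereal c * snd (bnds E C)"
      using True ih by (intro ereal_mult_left_mono) auto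
    ultimately show ?thesis using True by simp
  next
    case False
    have "ereal c * snd (bnds E C) \<le> ereal c * ereal (den E x)"
      using False ih by (intro ereal_neg_mult_anti) auto
    moreover have "ereal c * ereal (den E x) \<le> ereal c * fst (bnds E C)"
      using False ih by (intro ereal_neg_mult_anti) auto
    ultimately show ?thesis using False by simp
  qed
next
  case (Bias b E)
  then have ih: "fst (bnds E C) \<le> ereal (den E x)" "ereal (den E x) \<le> snd (bnds E C)" by auto
  have e: "ereal (den E x + b) = ereal (den E x) + ereal b" by simp
  have "fst (bnds E C) + ereal b \<le> ereal (den E x) + ereal b" using ih(1) by (rule add_right_mono)
  moreover have "ereal (den E x) + ereal b \<le> snd (bnds E C) + ereal b" using ih(2) by (rule add_right_mono)
  ultimately show ?case unfolding bnds.simps den.simps fst_conv snd_conv e by simp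
qed

lemma bnds_mono:
  "wf_lexpr E \<Longrightarrow> D \<subseteq> C \<Longrightarrow> fst (bnds E C) \<le> fst (bnds E D) \<and> snd (bnds E D) \<le> snd (bnds E C)"
proof (induction E)
  case (Affine w b)
  then show ?case by (simp add: INF_superset_mono SUP_subset_mono)
next
  case (SumE Es)
  have "sum_list (map (\<lambda>E. fst (bnds E C)) Es) \<le> sum_list (map (\<lambda>E. fst (bnds E D)) Es)"
    using SumE by (intro sum_list_mono) auto
  moreover have "sum_list (map (\<lambda>E. snd (bnds E D)) Es) \<le> sum_list (map (\<lambda>E. snd (bnds E C)) Es)"
    using SumE by (intro sum_list_mono) auto
  ultimately show ?case by simp
next
  case (MaxE Es)
  have ne: "Es \<noteq> []" using MaxE by simp
  have "Max (set (map (\<lambda>E. fst (bnds E C)) Es)) \<le> Max (set (map (\<lambda>E. fst (bnds E D)) Es))"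
    using MaxE ne by (intro Max_list_mono) auto
  moreover have "Max (set (map (\<lambda>E. snd (bnds E D)) Es)) \<le> Max (set (map (\<lambda>E. snd (bnds E C)) Es))"
    using MaxE ne by (intro Max_list_mono) auto
  ultimately show ?case by simp
next
  case (Scale c E)
  then have ih: "fst (bnds E C) \<le> fst (bnds E D)" "snd (bnds E D) \<le> snd (bnds E C)" by auto
  show ?case
  proof (cases "0 \<le> c")
    case True
    have "ereal c * fst (bnds E C) \<le> ereal c * fst (bnds E D)"
      using True ih by (intro ereal_mult_left_mono) auto
    moreover have "ereal c * snd (bnds E D) \<le> ereal c * snd (bnds E C)"
      using True ih by (intro ereal_mult_left_mono) auto
    ultimately show ?thesis using True by simp
  next
    case False
    have "ereal c * snd (bnds E C) \<le> ereal c * snd (bnds E D)"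
      using False ih by (intro ereal_neg_mult_anti) auto
    moreover have "ereal c * fst (bnds E D) \<le> ereal c * fst (bnds E C)"
      using False ih by (intro ereal_neg_mult_anti) auto
    ultimately show ?thesis using False by simp
  qed
next
  case (Bias b E)
  then have ih: "fst (bnds E C) \<le> fst (bnds E D)" "snd (bnds E D) \<le> snd (bnds E C)" by auto
  have "fst (bnds E C) + ereal b \<le> fst (bnds E D) + ereal b" using ih(1) by (rule add_right_mono)
  moreover have "snd (bnds E D) + ereal b \<le> snd (bnds E C) + ereal b" using ih(2) by (rule add_right_mono)
  ultimately show ?case by simp
qed

theorem mainTheorem9:
  fixes E :: "('n::finite) lexpr"
    and L L' :: "(real^'n) set set"
    and lo up lo' up' :: "(real^'n) set \<Rightarrow> ereal"
  assumes wf: "wf_lexpr E"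
    and finL: "finite L"
    and polyL: "\<forall>C\<in>L. polyhedron C \<and> C \<noteq> {}"
    and valid: "\<forall>C\<in>L. lo C \<le> (INF x\<in>C. ereal (den E x)) \<and> (SUP x\<in>C. ereal (den E x)) \<le> up C"
    and step: "split_step E L lo up L' lo' up' \<or> tighten_step E L lo up L' lo' up'"
  shows "(\<forall>x. lower_env L lo x \<le> lower_env L' lo' x \<and> upper_env L' up' x \<le> upper_env L up x)
       \<and> (\<forall>x. lower_env L' lo' x \<le> ereal (den E x) \<and> ereal (den E x) \<le> upper_env L' up' x)"
  using step
proof
  assume sp: "split_step E L lo up L' lo' up'"
  have loL: "\<forall>C\<in>L. lo C = LB E C \<and> up C = UB E C"
    using sp unfolding split_step_def by (elim conjE)
  have loL': "\<forall>D\<in>L'. lo' D = LB E D \<and> up' D = UB E D"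
    using sp unfolding split_step_def by (elim conjE)
  have "\<exists>C\<in>L. \<exists>a d. L' = (L - {C}) \<union>
         {D \<in> {C \<inter> {x. a \<bullet> x \<le> d}, C \<inter> {x. a \<bullet> x \<ge> d}}. D \<noteq> {}}"
    using sp unfolding split_step_def by (elim conjE)
  then obtain C0 a d where C0: "C0 \<in> L" and L'def: "L' = (L - {C0}) \<union>
         {D \<in> {C0 \<inter> {x. a \<bullet> x \<le> d}, C0 \<inter> {x. a \<bullet> x \<ge> d}}. D \<noteq> {}}"
    by (elim bexE exE)
  have cover: "\<exists>D\<in>L'. x \<in> D \<and> D \<subseteq> C \<and> lo' D \<ge> lo C \<and> up' D \<le> up C"
    if "C \<in> L" "x \<in> C" for C x
  proof (cases "C = C0")
    case False
    then have "C \<in> L'" using that unfolding L'def by blast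
    then have "lo' C = lo C" "up' C = up C" using that loL loL' by simp_all
    then show ?thesis using that \<open>C \<in> L'\<close> by (metis order_refl subset_refl)
  next
    case True
    define D where "D = (if a \<bullet> x \<le> d then C0 \<inter> {x. a \<bullet> x \<le> d} else C0 \<inter> {x. a \<bullet> x \<ge> d})"
    have D: "x \<in> D" "D \<subseteq> C" using True that by (auto simp: D_def)
    have Dne: "D \<noteq> {}" using D(1) by blast
    have "D = C0 \<inter> {x. a \<bullet> x \<le> d} \<or> D = C0 \<inter> {x. a \<bullet> x \<ge> d}" by (simp add: D_def)
    then have "D \<in> {D \<in> {C0 \<inter> {x. a \<bullet> x \<le> d}, C0 \<inter> {x. a \<bullet> x \<ge> d}}. D \<noteq> {}}"
      using Dne by blast
    then have "D \<in> L'" unfolding L'def by (rule UnI2)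
    have e1: "lo' D = fst (bnds E D)" "up' D = snd (bnds E D)"
      using loL' \<open>D \<in> L'\<close> by (simp_all add: LB_def UB_def)
    have e2: "lo C = fst (bnds E C)" "up C = snd (bnds E C)"
      using loL that(1) by (simp_all add: LB_def UB_def)
    have "lo' D \<ge> lo C" "up' D \<le> up C"
      using bnds_mono[OF wf D(2)] unfolding e1 e2 by simp_all
    with \<open>D \<in> L'\<close>
    show ?thesis using D by blast
  qed
  have A: "lower_env L lo x \<le> lower_env L' lo' x \<and> upper_env L' up' x \<le> upper_env L up x" for x
  proof
    show "lower_env L lo x \<le> lower_env L' lo' x" unfolding lower_env_def
    proof (rule SUP_least)
      fix C assume "C \<in> {C \<in> L. x \<in> C}"
      then have "C \<in> L" "x \<in> C" by simp_all
      from cover[OF this] obtain D where D: "D\<in>L'" "x \<in> D" "lo' D \<ge> lo C" by (elim bexE conjE)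
      have "lo' D \<le> (SUP C\<in>{C \<in> L'. x \<in> C}. lo' C)" by (rule SUP_upper) (simp add: D)
      with D(3) show "lo C \<le> (SUP C\<in>{C \<in> L'. x \<in> C}. lo' C)" by (rule order_trans)
    qed
    show "upper_env L' up' x \<le> upper_env L up x" unfolding upper_env_def
    proof (rule INF_greatest)
      fix C assume "C \<in> {C \<in> L. x \<in> C}"
      then have "C \<in> L" "x \<in> C" by simp_all
      from cover[OF this] obtain D where D: "D\<in>L'" "x \<in> D" "up' D \<le> up C" by (elim bexE conjE)
      have "(INF C\<in>{C \<in> L'. x \<in> C}. up' C) \<le> up' D" by (rule INF_lower) (simp add: D)
      then show "(INF C\<in>{C \<in> L'. x \<in> C}. up' C) \<le> up C" using D(3) by (rule order_trans)
    qed
  qed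
  have B: "lower_env L' lo' x \<le> ereal (den E x) \<and> ereal (den E x) \<le> upper_env L' up' x" for x
    unfolding lower_env_def upper_env_def
  proof
    show "(SUP C\<in>{C \<in> L'. x \<in> C}. lo' C) \<le> ereal (den E x)"
    proof (rule SUP_least)
      fix C assume C: "C \<in> {C \<in> L'. x \<in> C}"
      then have "C \<in> L'" "x \<in> C" by simp_all
      then have "lo' C = fst (bnds E C)" using loL' by (simp add: LB_def)
      then show "lo' C \<le> ereal (den E x)" using bnds_sound[OF wf \<open>x \<in> C\<close>] by simp
    qed
    show "ereal (den E x) \<le> (INF C\<in>{C \<in> L'. x \<in> C}. up' C)"
    proof (rule INF_greatest)
      fix C assume C: "C \<in> {C \<in> L'. x \<in> C}"
      then have "C \<in> L'" "x \<in> C" by simp_all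
      then have "up' C = snd (bnds E C)" using loL' by (simp add: UB_def)
      then show "ereal (den E x) \<le> up' C" using bnds_sound[OF wf \<open>x \<in> C\<close>] by simp
    qed
  qed
  show ?thesis using A B by blast
next
  assume tt: "tighten_step E L lo up L' lo' up'"
  then have LL: "L' = L" unfolding tighten_step_def by (elim conjE)
  from tt obtain C0 v where C0: "C0 \<in> L" and
    cs: "(lo C0 < v \<and> v \<le> (INF x\<in>C0. ereal (den E x)) \<and> lo' = lo(C0 := v) \<and> up' = up) \<or>
        (v < up C0 \<and> (SUP x\<in>C0. ereal (den E x)) \<le> v \<and> up' = up(C0 := v) \<and> lo' = lo)"
    unfolding tighten_step_def by (elim conjE bexE exE)
  have le: "lo C \<le> lo' C \<and> up' C \<le> up C" for C
    using cs by (cases "C = C0") auto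
  have val': "lo' C \<le> (INF x\<in>C. ereal (den E x)) \<and> (SUP x\<in>C. ereal (den E x)) \<le> up' C" if "C \<in> L" for C
  proof (cases "C = C0")
    case True
    then show ?thesis using cs valid that by (elim disjE) auto
  next
    case False
    then show ?thesis using cs valid that by (elim disjE) auto
  qed
  have A: "lower_env L lo x \<le> lower_env L' lo' x \<and> upper_env L' up' x \<le> upper_env L up x" for x
    unfolding lower_env_def upper_env_def LL using le by (intro conjI SUP_mono' INF_mono') auto
  have B: "lower_env L' lo' x \<le> ereal (den E x) \<and> ereal (den E x) \<le> upper_env L' up' x" for x
    unfolding lower_env_def upper_env_def LL
  proof
    show "(SUP C\<in>{C \<in> L. x \<in> C}. lo' C) \<le> ereal (den E x)"
    proof (rule SUP_least)
      fix C assume C: "C \<in> {C \<in> L. x \<in> C}"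
      then have "lo' C \<le> (INF x\<in>C. ereal (den E x))" using val' by auto
      also have "\<dots> \<le> ereal (den E x)" using C by (auto intro: INF_lower)
      finally show "lo' C \<le> ereal (den E x)" .
    qed
    show "ereal (den E x) \<le> (INF C\<in>{C \<in> L. x \<in> C}. up' C)"
    proof (rule INF_greatest)
      fix C assume C: "C \<in> {C \<in> L. x \<in> C}"
      have "ereal (den E x) \<le> (SUP x\<in>C. ereal (den E x))" using C by (auto intro: SUP_upper)
      also have "\<dots> \<le> up' C" using val' C by auto
      finally show "ereal (den E x) \<le> up' C" .
    qed
  qed
  show ?thesis using A B by blast
qed

end
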